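(* Let $Q$ be a finite closed down set of pairs with parameters $p,q,k$, $I_0,\dots,I_{k-1}$, $II_1,\dots,II_k$ as described in the context. Then $$|Q|\ge\sum_{j=1}^k II_j\Big(p+I_0+\sum_{\ell=1}^{j-1}(II_\ell+I_\ell)\Big).$$
   Context: Let $c_1,c_2,\dots$ and $s_1,s_2,\dots$ be distinct vertices, and let $Q$ be a finite set of pairs $c_as_b$ that is closed down: $c_as_b\in Q$ implies $c_{a'}s_{b'}\in Q$ for all $a'\le a$, $b'\le b$. Write $[i]\times[j]=\{c_as_b:a\le i,b\le j\}$, and let $\nu(\ell,Q)$ be the matching number of the bipartite graph with sides $\{c_1,\dots,c_\ell\},\{s_1,\dots,s_\ell\}$ and edge set $([\ell]\times[\ell])\setminus Q$. Let $p\ge0$ be the largest integer with $[p]\times[p]\subseteq Q$, and $q\ge0$ the least integer such that $\nu(\ell,Q)=\ell$ for all $\ell\ge p+q$. For every $\ell>p$ one has $\nu(\ell,Q)-\nu(\ell-1,Q)\in\{1,2\}$. The integer interval $(p,p+q]$ is divided, in increasing order, into consecutive left-open right-closed integer intervals $\mathcal O_0,\mathcal T_1,\mathcal O_1,\dots,\mathcal O_{k-1},\mathcal T_k$ such that the increment $\nu(\ell,Q)-\nu(\ell-1,Q)$ is $1$ for $\ell$ in each $\mathcal O_j$ and $2$ for $\ell$ in each $\mathcal T_j$; all intervals except possibly $\mathcal O_0$ are nonempty and the last one is $\mathcal T_k$. Set $I_j=|\mathcal O_j|$ and $II_j=|\mathcal T_j|$. *)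

theory Defs
  imports Main
begin

text \<open>Vertex c_a is encoded by index a, vertex s_b by index b (a, b \<ge> 1);
  the pair c_a s_b is encoded as (a, b) :: nat \<times> nat.\<close>

definition box :: "nat \<Rightarrow> nat \<Rightarrow> (nat \<times> nat) set" where
  "box i j = {1..i} \<times> {1..j}"

definition closed_down :: "(nat \<times> nat) set \<Rightarrow> bool" where
  "closed_down Q \<longleftrightarrow> Q \<subseteq> {1..} \<times> {1..} \<and>
     (\<forall>a b a' b'. (a, b) \<in> Q \<longrightarrow> 1 \<le> a' \<longrightarrow> a' \<le> a \<longrightarrow> 1 \<le> b' \<longrightarrow> b' \<le> b \<longrightarrow> (a', b') \<in> Q)"

definition bip_matching :: "(nat \<times> nat) set \<Rightarrow> (nat \<times> nat) set \<Rightarrow> bool" where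
  "bip_matching E M \<longleftrightarrow> M \<subseteq> E \<and> inj_on fst M \<and> inj_on snd M"

definition nu :: "nat \<Rightarrow> (nat \<times> nat) set \<Rightarrow> nat" where
  "nu l Q = Max (card ` {M. bip_matching (box l l - Q) M})"

end

theory Submission
  imports Defs
begin

lemma matchings_finite: "finite {M. bip_matching (box l l - Q) M}"
proof -
  have "{M. bip_matching (box l l - Q) M} \<subseteq> Pow (box l l)" by (auto simp: bip_matching_def)
  moreover have "finite (box l l)" by (simp add: box_def)
  ultimately show ?thesis by (meson finite_Pow_iff finite_subset)
qed

lemma nu_ge: "bip_matching (box l l - Q) M \<Longrightarrow> card M \<le> nu l Q"
  unfolding nu_def by (rule Max_ge) (auto intro: finite_imageI matchings_finite)

lemma nu_le: assumes "\<And>M. bip_matching (box l l - Q) M \<Longrightarrow> card M \<le> n" shows "nu l Q \<le> n"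
proof -
  have "bip_matching (box l l - Q) {}" by (simp add: bip_matching_def)
  then show ?thesis unfolding nu_def using assms matchings_finite[of l Q]
    by (subst Max_le_iff) auto
qed

lemma antidiag: assumes "1 \<le> D" "\<forall>a\<in>{D..l}. (a, l+D-a) \<notin> Q" shows "l + 1 - D \<le> nu l Q"
proof -
  define M where "M = (\<lambda>a. (a, l+D-a)) ` {D..l}"
  have inj: "inj_on (\<lambda>a. (a, l+D-a)) {D..l}" by (auto simp: inj_on_def)
  have "bip_matching (box l l - Q) M"
    unfolding bip_matching_def M_def using assms
    by (auto simp: box_def inj_on_def)
  hence "card M \<le> nu l Q" by (rule nu_ge)
  moreover have "card M = l + 1 - D" unfolding M_def using card_image[OF inj] by simp
  ultimately show ?thesis by simp
qed

lemma hall: assumes cd: "closed_down Q" and ab: "(a,b) \<in> Q" "a \<le> l" "b \<le> l"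
  shows "nu l Q + a + b \<le> 2*l"
proof -
  have "nu l Q \<le> 2*l - a - b"
  proof (rule nu_le)
    fix M assume M: "bip_matching (box l l - Q) M"
    define M1 where "M1 = {e\<in>M. fst e \<le> a}"
    define M2 where "M2 = {e\<in>M. \<not> fst e \<le> a}"
    have fM: "finite M" using M by (intro finite_subset[of M "box l l"]) (auto simp: bip_matching_def box_def)
    have "M = M1 \<union> M2" by (auto simp: M1_def M2_def)
    hence "card M \<le> card M1 + card M2" by (metis card_Un_le)
    moreover have "card M1 \<le> l - b"
    proof -
      have "inj_on snd M1" using M by (auto simp: bip_matching_def M1_def intro: inj_on_subset)
      hence "card M1 = card (snd ` M1)" by (simp add: card_image)
      moreover have "snd ` M1 \<subseteq> {b<..l}"
      proof
        fix y assume "y \<in> snd ` M1"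
        then obtain x where xy: "(x,y) \<in> M" "x \<le> a" by (auto simp: M1_def)
        hence xy2: "(x,y) \<in> box l l" "(x,y) \<notin> Q" using M by (auto simp: bip_matching_def)
        hence "1 \<le> x" "1 \<le> y" "y \<le> l" by (auto simp: box_def)
        moreover have "\<not> y \<le> b"
          using cd ab xy xy2 \<open>1 \<le> x\<close> \<open>1 \<le> y\<close> unfolding closed_down_def by blast
        ultimately show "y \<in> {b<..l}" by simp
      qed
      hence "card (snd ` M1) \<le> l - b" by (metis card_greaterThanAtMost card_mono finite_greaterThanAtMost)
      ultimately show ?thesis by simp
    qed
    moreover have "card M2 \<le> l - a"
    proof -
      have "inj_on fst M2" using M by (auto simp: bip_matching_def M2_def intro: inj_on_subset)
      hence "card M2 = card (fst ` M2)" by (simp add: card_image)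
      moreover have "fst ` M2 \<subseteq> {a<..l}"
        using M by (auto simp: M2_def bip_matching_def box_def)
      hence "card (fst ` M2) \<le> l - a" by (metis card_greaterThanAtMost card_mono finite_greaterThanAtMost)
      ultimately show ?thesis by simp
    qed
    ultimately show "card M \<le> 2*l - a - b" using ab by linarith
  qed
  thus ?thesis using ab by linarith
qed

lemma lem_pair: assumes cd: "closed_down Q" and D: "1 \<le> D" and u: "nu l Q + D \<le> l"
  and w: "l \<le> nu (l-1) Q + D + 1"
  shows "(D,l) \<in> Q \<or> (l,D) \<in> Q"
proof -
  have "\<not> (l + 1 - D \<le> nu l Q)" using u by linarith
  then obtain a where a: "a \<in> {D..l}" "(a, l+D-a) \<in> Q" using antidiag[OF D, of l Q] by blast
  show ?thesis
  proof (cases "a = D \<or> a = l")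
    case True thus ?thesis using a by auto
  next
    case False
    hence "a \<le> l - 1" "l + D - a \<le> l - 1" using a by auto
    from hall[OF cd a(2) this] have "nu (l-1) Q + a + (l + D - a) \<le> 2 * (l - 1)" .
    thus ?thesis using w False a by auto
  qed
qed


lemma nu_le_l: "nu l Q \<le> l"
proof (rule nu_le)
  fix M assume M: "bip_matching (box l l - Q) M"
  hence "inj_on fst M" by (simp add: bip_matching_def)
  hence "card M = card (fst ` M)" by (simp add: card_image)
  moreover have "fst ` M \<subseteq> {1..l}" using M by (auto simp: bip_matching_def box_def)
  hence "card (fst ` M) \<le> l" by (metis card_atLeastAtMost card_mono finite_atLeastAtMost diff_Suc_1)
  ultimately show "card M \<le> l" by simp
qed

theorem lemma7:
  fixes Q :: "(nat \<times> nat) set" and p q k :: nat and I II :: "nat \<Rightarrow> nat"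
  assumes fin: "finite Q"
    and cd: "closed_down Q"
    and p_def: "p = (GREATEST p. box p p \<subseteq> Q)"
    and q_def: "q = (LEAST q. \<forall>l\<ge>p + q. nu l Q = l)"
    and II_pos: "\<forall>j\<in>{1..k}. II j \<ge> 1"
    and I_pos: "\<forall>j\<in>{1..<k}. I j \<ge> 1"
    and len: "q = I 0 + (\<Sum>j=1..k. II j) + (\<Sum>j=1..<k. I j)"
    and incr: "\<forall>l. p < l \<and> l \<le> p + q \<longrightarrow>
        nu l Q = nu (l - 1) Q +
          (if \<exists>j\<in>{1..k}. p + I 0 + (\<Sum>i=1..<j. II i + I i) < l
                       \<and> l \<le> p + I 0 + (\<Sum>i=1..<j. II i + I i) + II j
           then 2 else 1)"
  shows "int (card Q) \<ge> (\<Sum>j=1..k. int (II j) * int (p + I 0 + (\<Sum>i=1..<j. II i + I i)))"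
proof -
  define L where "L = (\<lambda>j. p + I 0 + (\<Sum>i=1..<j. II i + I i))"
  define D where "D = (\<lambda>j. \<Sum>i=j..k. II i)"
  have incr': "\<And>l. p < l \<Longrightarrow> l \<le> p+q \<Longrightarrow> nu l Q = nu (l-1) Q +
      (if \<exists>j\<in>{1..k}. L j < l \<and> l \<le> L j + II j then 2 else 1)"
    using incr by (simp add: L_def)
  have cd': "\<And>a b a' b'. (a,b)\<in>Q \<Longrightarrow> 1 \<le> a' \<Longrightarrow> a' \<le> a \<Longrightarrow> 1 \<le> b' \<Longrightarrow> b' \<le> b \<Longrightarrow> (a',b') \<in> Q"
    using cd unfolding closed_down_def by blast
  have goal_eq: "(\<Sum>j=1..k. int (II j) * int (p + I 0 + (\<Sum>i=1..<j. II i + I i))) = (\<Sum>j=1..k. int (II j) * int (L j))"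
    by (simp add: L_def)
  obtain B where B: "\<forall>n\<in>(\<lambda>(x,y). x+y) ` Q. n < B"
    using fin finite_nat_set_iff_bounded by (meson finite_imageI)
  hence B': "\<And>x y. (x,y) \<in> Q \<Longrightarrow> x + y < B" by fastforce
  have nuB: "\<And>l. B \<le> l \<Longrightarrow> nu l Q = l"
  proof -
    fix l assume "B \<le> l"
    hence "\<forall>a\<in>{1..l}. (a, l+1-a) \<notin> Q" using B' by fastforce
    from antidiag[of 1, OF _ this] have "l \<le> nu l Q" by simp
    thus "nu l Q = l" using nu_le_l[of l Q] by simp
  qed
  have "\<forall>l\<ge>p + q. nu l Q = l" unfolding q_def
    by (rule LeastI[of _ B]) (auto intro: nuB)
  hence nupq: "nu (p+q) Q = p + q" by simp
  have boxp: "box p p \<subseteq> Q" unfolding p_def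
  proof (rule GreatestI_nat[of _ 0 B])
    show "box 0 0 \<subseteq> Q" by (simp add: box_def)
  next
    fix y assume y: "box y y \<subseteq> Q"
    show "y \<le> B"
    proof (cases "y = 0")
      case False
      hence "(y,y) \<in> Q" using y by (auto simp: box_def)
      thus ?thesis using B' by fastforce
    qed simp
  qed
  show ?thesis
  proof (cases "k = 0")
    case True thus ?thesis by simp
  next
    case False
    hence k1: "1 \<le> k" by simp
    have Lsuc: "\<And>i. 1 \<le> i \<Longrightarrow> L (Suc i) = L i + II i + I i" by (simp add: L_def)
    have Lmono: "\<And>i i'. i \<le> i' \<Longrightarrow> L i \<le> L i'" unfolding L_def by (auto intro!: sum_mono2)
    have Lgap: "\<And>i i'. 1 \<le> i \<Longrightarrow> i < i' \<Longrightarrow> i' \<le> k \<Longrightarrow> L i + II i < L i'"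
    proof -
      fix i i' assume "1 \<le> i" "i < i'" "i' \<le> k"
      hence "I i \<ge> 1" using I_pos by auto
      moreover have "L (Suc i) \<le> L i'" using \<open>i < i'\<close> Lmono by simp
      ultimately show "L i + II i < L i'" using Lsuc[OF \<open>1 \<le> i\<close>] by simp
    qed
    have Lend: "L k + II k = p + q"
    proof -
      have e1: "{1..k} = insert k {1..<k}" using k1 by auto
      have "(\<Sum>j=1..k. II j) = II k + (\<Sum>j=1..<k. II j)" unfolding e1 by simp
      thus ?thesis unfolding L_def len by (simp add: sum.distrib)
    qed
    have LleT: "\<And>i. 1 \<le> i \<Longrightarrow> i \<le> k \<Longrightarrow> L i + II i \<le> p + q"
    proof -
      fix i assume i: "1 \<le> i" "i \<le> k"
      show "L i + II i \<le> p + q"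
      proof (cases "i = k")
        case True thus ?thesis using Lend by simp
      next
        case False thus ?thesis using Lgap[of i k] i Lend by simp
      qed
    qed
    have Lp: "\<And>i. p \<le> L i" by (simp add: L_def)
    have T: "\<And>i m. 1\<le>i \<Longrightarrow> i\<le>k \<Longrightarrow> m \<le> II i \<Longrightarrow> nu (L i + m) Q = nu (L i) Q + 2*m"
    proof -
      fix i m assume i: "1\<le>i" "i\<le>k"
      show "m \<le> II i \<Longrightarrow> nu (L i + m) Q = nu (L i) Q + 2*m"
      proof (induction m)
        case (Suc m)
        have c: "\<exists>j\<in>{1..k}. L j < L i + Suc m \<and> L i + Suc m \<le> L j + II j"
          using i Suc.prems by (intro bexI[of _ i]) auto
        have "nu (L i + Suc m) Q = nu (L i + Suc m - 1) Q + 2"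
          using incr'[of "L i + Suc m"] c Lp[of i] LleT[OF i] Suc.prems by simp
        thus ?case using Suc by simp
      qed simp
    qed
    have O: "\<And>i m. 1\<le>i \<Longrightarrow> i<k \<Longrightarrow> m \<le> I i \<Longrightarrow> nu (L i + II i + m) Q = nu (L i + II i) Q + m"
    proof -
      fix i m assume i: "1\<le>i" "i<k"
      show "m \<le> I i \<Longrightarrow> nu (L i + II i + m) Q = nu (L i + II i) Q + m"
      proof (induction m)
        case (Suc m)
        have c: "\<not> (\<exists>j\<in>{1..k}. L j < L i + II i + Suc m \<and> L i + II i + Suc m \<le> L j + II j)"
        proof
          assume "\<exists>j\<in>{1..k}. L j < L i + II i + Suc m \<and> L i + II i + Suc m \<le> L j + II j"
          then obtain j where j: "j\<in>{1..k}" "L j < L i + II i + Suc m" "L i + II i + Suc m \<le> L j + II j" by blast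
          show False
          proof (cases "j \<le> i")
            case True
            hence "L j + II j \<le> L i + II i" using Lgap[of j i] j(1) i by (cases "j = i") auto
            thus False using j by simp
          next
            case False
            hence "L (Suc i) \<le> L j" using Lmono by simp
            thus False using j Lsuc[OF i(1)] Suc.prems by simp
          qed
        qed
        have "L i + II i + Suc m \<le> L (Suc i)" using Lsuc[OF i(1)] Suc.prems by simp
        moreover have "L (Suc i) \<le> L k" using Lmono i by simp
        ultimately have "L i + II i + Suc m \<le> p + q" using Lend by simp
        hence "nu (L i + II i + Suc m) Q = nu (L i + II i + Suc m - 1) Q + 1"
          using incr'[of "L i + II i + Suc m"] c Lp[of i] by simp
        thus ?case using Suc by simp
      qed simp
    qed
    have DSuc: "\<And>i. i \<le> k \<Longrightarrow> D i = II i + D (Suc i)"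
      unfolding D_def by (rule sum.atLeast_Suc_atMost)
    have DSk: "D (Suc k) = 0" by (simp add: D_def)
    have F7: "\<And>i. 1 \<le> i \<Longrightarrow> i \<le> k \<Longrightarrow> nu (L i) Q + D i = L i"
    proof -
      have "\<And>n. n < k \<Longrightarrow> nu (L (k - n)) Q + D (k-n) = L (k-n)"
      proof -
        fix n show "n < k \<Longrightarrow> nu (L (k - n)) Q + D (k-n) = L (k-n)"
        proof (induction n)
          case 0
          have "nu (L k + II k) Q = nu (L k) Q + 2 * II k" using T[of k "II k"] k1 by simp
          thus ?case using nupq Lend DSuc[of k] DSk by simp
        next
          case (Suc n)
          define i where "i = k - Suc n"
          have i: "1 \<le> i" "i < k" "Suc i = k - n" using Suc.prems by (auto simp: i_def)
          have IH: "nu (L (Suc i)) Q + D (Suc i) = L (Suc i)" using Suc i by simp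
          have o: "nu (L i + II i + I i) Q = nu (L i + II i) Q + I i" using O[of i "I i"] i by simp
          have t: "nu (L i + II i) Q = nu (L i) Q + 2 * II i" using T[of i "II i"] i by simp
          have "nu (L i) Q + D i = L i"
            using IH o t Lsuc[OF i(1)] DSuc[of i] i by simp
          thus ?case by (simp add: i_def)
        qed
      qed
      fix i assume "1 \<le> i" "i \<le> k"
      thus "nu (L i) Q + D i = L i" using \<open>\<And>n. n < k \<Longrightarrow> _\<close>[of "k - i"] by simp
    qed
    have Dpos: "\<And>j. 1 \<le> j \<Longrightarrow> j \<le> k \<Longrightarrow> II j \<le> D j \<and> 1 \<le> D j"
    proof -
      fix j assume j: "1 \<le> j" "j \<le> k"
      have "D j = II j + D (Suc j)" using DSuc j by simp
      moreover have "1 \<le> II j" using II_pos j by simp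
      ultimately show "II j \<le> D j \<and> 1 \<le> D j" by simp
    qed
    have Lm1: "\<And>j. 1 \<le> j \<Longrightarrow> j \<le> k \<Longrightarrow> p < L j \<Longrightarrow> nu (L j) Q = nu (L j - 1) Q + 1"
    proof -
      fix j assume j: "1 \<le> j" "j \<le> k" "p < L j"
      have c: "\<not> (\<exists>j'\<in>{1..k}. L j' < L j \<and> L j \<le> L j' + II j')"
      proof
        assume "\<exists>j'\<in>{1..k}. L j' < L j \<and> L j \<le> L j' + II j'"
        then obtain j' where j': "j'\<in>{1..k}" "L j' < L j" "L j \<le> L j' + II j'" by blast
        show False
        proof (cases "j' < j")
          case True thus False using Lgap[of j' j] j j' by simp
        next
          case False thus False using Lmono[of j j'] j' by simp
        qed
      qed
      have "L j \<le> p + q" using LleT[OF j(1,2)] by simp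
      thus "nu (L j) Q = nu (L j - 1) Q + 1" using incr'[of "L j"] c j by simp
    qed
    have pair: "\<And>j. 1 \<le> j \<Longrightarrow> j \<le> k \<Longrightarrow> (D j, L j) \<in> Q \<or> (L j, D j) \<in> Q"
    proof -
      fix j assume j: "1 \<le> j" "j \<le> k"
      have f: "nu (L j) Q + D j = L j" using F7 j by simp
      have d: "1 \<le> D j" using Dpos j by simp
      show "(D j, L j) \<in> Q \<or> (L j, D j) \<in> Q"
      proof (cases "p < L j")
        case True
        show ?thesis
          by (rule lem_pair[OF cd d]) (use f Lm1[OF j True] in simp_all)
      next
        case False
        hence "L j = p" using Lp[of j] by simp
        hence "(D j, L j) \<in> box p p" using f d by (auto simp: box_def)
        thus ?thesis using boxp by auto
      qed
    qed
    define N where "N = D 1"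
    have DleN: "\<And>j. 1 \<le> j \<Longrightarrow> D j \<le> N" unfolding N_def D_def by (auto intro!: sum_mono2)
    have NleL: "\<And>j. 1 \<le> j \<Longrightarrow> N \<le> L j"
    proof -
      fix j :: nat assume "1 \<le> j"
      have "nu (L 1) Q + D 1 = L 1" using F7[of 1] k1 by simp
      moreover have "L 1 \<le> L j" using Lmono \<open>1 \<le> j\<close> by simp
      ultimately show "N \<le> L j" unfolding N_def by linarith
    qed
    have Dmono: "\<And>j j'. j \<le> j' \<Longrightarrow> D j' \<le> D j" unfolding D_def by (auto intro!: sum_mono2)
    define blk where "blk = (\<lambda>j. if (D j, L j) \<in> Q then {D j - II j<..D j} \<times> {N<..L j}
                                else {N<..L j} \<times> {D j - II j<..D j})"
    define sq where "sq = {1..N} \<times> {1..N}"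
    have sqQ: "sq \<subseteq> Q"
    proof
      fix z assume "z \<in> sq"
      then obtain x y where z: "z = (x,y)" "1 \<le> x" "x \<le> N" "1 \<le> y" "y \<le> N" by (auto simp: sq_def)
      have "N \<le> L 1" using NleL by simp
      thus "z \<in> Q" using pair[of 1] k1 z cd'[of "D 1" "L 1" x y] cd'[of "L 1" "D 1" x y]
        unfolding N_def by auto
    qed
    have blkQ: "\<And>j. j\<in>{1..k} \<Longrightarrow> blk j \<subseteq> Q"
    proof
      fix j z assume j: "j \<in> {1..k}" and z: "z \<in> blk j"
      obtain x y where xy: "z = (x,y)" by fastforce
      show "z \<in> Q"
      proof (cases "(D j, L j) \<in> Q")
        case True
        thus ?thesis using z xy cd'[of "D j" "L j" x y] unfolding blk_def by auto
      next
        case False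
        hence "(L j, D j) \<in> Q" using pair j by auto
        thus ?thesis using False z xy cd'[of "L j" "D j" x y] unfolding blk_def by auto
      qed
    qed
    have key: "\<And>j j'. j \<in> {1..k} \<Longrightarrow> j' \<in> {1..k} \<Longrightarrow> j < j' \<Longrightarrow> blk j \<inter> blk j' = {}"
    proof -
      fix j j' assume j: "j \<in> {1..k}" "j' \<in> {1..k}" "j < j'"
      have a: "D j' \<le> D j - II j" using DSuc[of j] Dmono[of "Suc j" j'] j by auto
      have b: "D j \<le> N" "D j' \<le> N" using DleN j by auto
      show "blk j \<inter> blk j' = {}" unfolding blk_def using a b by auto
    qed
    have disj: "\<forall>j\<in>{1..k}. \<forall>j'\<in>{1..k}. j \<noteq> j' \<longrightarrow> blk j \<inter> blk j' = {}"
      using key by (metis Int_commute linorder_neqE_nat)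
    have sqdisj: "sq \<inter> (\<Union>j\<in>{1..k}. blk j) = {}"
      unfolding sq_def blk_def by auto
    have cardblk: "\<And>j. j\<in>{1..k} \<Longrightarrow> card (blk j) = II j * (L j - N)"
    proof -
      fix j assume j: "j\<in>{1..k}"
      have "II j \<le> D j" using Dpos j by auto
      thus "card (blk j) = II j * (L j - N)" unfolding blk_def by (simp add: card_cartesian_product)
    qed
    have "card (sq \<union> (\<Union>j\<in>{1..k}. blk j)) = card sq + card (\<Union>j\<in>{1..k}. blk j)"
      by (rule card_Un_disjoint) (auto simp: sq_def blk_def sqdisj)
    also have "card (\<Union>j\<in>{1..k}. blk j) = (\<Sum>j=1..k. card (blk j))"
      by (rule card_UN_disjoint[OF _ _ disj]) (simp_all add: blk_def)
    also have "\<dots> = (\<Sum>j=1..k. II j * (L j - N))" using cardblk by simp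
    finally have cu: "card (sq \<union> (\<Union>j\<in>{1..k}. blk j)) = N * N + (\<Sum>j=1..k. II j * (L j - N))"
      by (simp add: sq_def)
    have "card (sq \<union> (\<Union>j\<in>{1..k}. blk j)) \<le> card Q"
      by (rule card_mono[OF fin]) (use sqQ blkQ in blast)
    hence "int (N * N + (\<Sum>j=1..k. II j * (L j - N))) \<le> int (card Q)" using cu by (simp only: of_nat_le_iff)
    moreover have "int (N * N + (\<Sum>j=1..k. II j * (L j - N))) = (\<Sum>j=1..k. int (II j) * int (L j))"
    proof -
      have "int (\<Sum>j=1..k. II j * (L j - N)) = (\<Sum>j=1..k. int (II j) * int (L j) - int (II j) * int N)"
        using NleL by (auto simp: of_nat_diff algebra_simps intro!: sum.cong)
      also have "\<dots> = (\<Sum>j=1..k. int (II j) * int (L j)) - int N * (\<Sum>j=1..k. int (II j))"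
        by (simp add: sum_subtractf sum_distrib_left mult.commute)
      also have "(\<Sum>j=1..k. int (II j)) = int N" unfolding N_def D_def by simp
      finally show ?thesis by simp
    qed
    ultimately show ?thesis using goal_eq by simp
  qed
qed

end
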